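(* Let $\rho\in\mathcal{D}$ be non-singular with $f$ differentiable at $\rho$. If $\rho$ is a minimizer of $f$ on $\mathcal{D}$, then $\rho(\alpha)=\rho$ for all $\alpha\ge0$. If $\rho(\alpha)=\rho$ for some $\alpha>0$, then $\rho$ is a minimizer of $f$ on $\mathcal{D}$.
   Context: $\mathcal{D}=\{\rho\in\mathbb{C}^{d\times d}:\rho\succeq0,\ \operatorname{tr}\rho=1\}$; $f$ is a convex function on $d\times d$ Hermitian matrices; $\nabla f(\rho)$ is its Hermitian gradient w.r.t. $\langle A,B\rangle=\operatorname{tr}(A^{\mathrm H}B)$. $\rho(\alpha):=\exp[\log\rho-\alpha\nabla f(\rho)]/\operatorname{tr}\exp[\log\rho-\alpha\nabla f(\rho)]$ (matrix exponential/logarithm). *)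

theory Defs
  imports "HOL-Analysis.Analysis"
begin

type_synonym 'n cmat = "complex^'n^'n"

definition cadj :: "'n::finite cmat \<Rightarrow> 'n cmat" where
  "cadj A = (\<chi> i j. cnj (A $ j $ i))"

definition hermitian :: "'n::finite cmat \<Rightarrow> bool" where
  "hermitian A \<longleftrightarrow> cadj A = A"

definition qform :: "'n::finite cmat \<Rightarrow> complex^'n \<Rightarrow> complex" where
  "qform A x = (\<Sum>i\<in>UNIV. \<Sum>j\<in>UNIV. cnj (x $ i) * A $ i $ j * x $ j)"

definition psd :: "'n::finite cmat \<Rightarrow> bool" where
  "psd A \<longleftrightarrow> hermitian A \<and> (\<forall>x. Im (qform A x) = 0 \<and> 0 \<le> Re (qform A x))"

definition density :: "'n::finite cmat set" where
  "density = {\<rho>. psd \<rho> \<and> trace \<rho> = 1}"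

primrec mpow :: "'n::finite cmat \<Rightarrow> nat \<Rightarrow> 'n cmat" where
  "mpow A 0 = mat 1"
| "mpow A (Suc k) = A ** mpow A k"

definition mexp :: "'n::finite cmat \<Rightarrow> 'n cmat" where
  "mexp A = (\<Sum>k. (1 / fact k) *\<^sub>R mpow A k)"

text \<open>Matrix logarithm of a positive definite matrix: the unique Hermitian L with exp L = A.\<close>
definition mlog :: "'n::finite cmat \<Rightarrow> 'n cmat" where
  "mlog A = (THE L. hermitian L \<and> mexp L = A)"

definition rho_step :: "'n::finite cmat \<Rightarrow> 'n cmat \<Rightarrow> real \<Rightarrow> 'n cmat" where
  "rho_step G \<rho> \<alpha> = (let E = mexp (mlog \<rho> - \<alpha> *\<^sub>R G) in (\<chi> i j. E $ i $ j / trace E))"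

definition is_gradient :: "('n::finite cmat \<Rightarrow> real) \<Rightarrow> 'n cmat \<Rightarrow> 'n cmat \<Rightarrow> bool" where
  "is_gradient f \<rho> G \<longleftrightarrow> hermitian G \<and>
     (f has_derivative (\<lambda>H. Re (trace (cadj G ** H)))) (at \<rho> within {A. hermitian A})"

definition is_minimizer :: "('n::finite cmat \<Rightarrow> real) \<Rightarrow> 'n cmat \<Rightarrow> bool" where
  "is_minimizer f \<rho> \<longleftrightarrow> \<rho> \<in> density \<and> (\<forall>\<sigma>\<in>density. f \<rho> \<le> f \<sigma>)"

end

theory Submission
  imports Defs
begin

definition cinner :: "complex^'n::finite \<Rightarrow> complex^'n \<Rightarrow> complex" where
  "cinner x y = (\<Sum>i\<in>UNIV. cnj (x$i) * y$i)"

definition dg :: "('n::finite \<Rightarrow> complex) \<Rightarrow> complex^'n^'n" where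
  "dg d = (\<chi> i j. if i = j then d i else 0)"

lemma cinner_add_left: "cinner (x + y) z = cinner x z + cinner y z"
  by (simp add: cinner_def sum.distrib ring_distribs)
lemma cinner_add_right: "cinner z (x + y) = cinner z x + cinner z y"
  by (simp add: cinner_def sum.distrib ring_distribs)
lemma cinner_diff_left: "cinner (x - y) z = cinner x z - cinner y z"
  by (simp add: cinner_def sum_subtractf ring_distribs)
lemma cinner_diff_right: "cinner z (x - y) = cinner z x - cinner z y"
  by (simp add: cinner_def sum_subtractf ring_distribs)
lemma cinner_scale_left: "cinner (c *s x) z = cnj c * cinner x z"
  by (simp add: cinner_def sum_distrib_left mult.assoc)
lemma cinner_scale_right: "cinner z (c *s x) = c * cinner z x"
  by (simp add: cinner_def sum_distrib_left algebra_simps)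
lemma cinner_cnj: "cnj (cinner x y) = cinner y x"
  by (simp add: cinner_def mult.commute)
lemma cinner_zero_left[simp]: "cinner 0 x = 0" by (simp add: cinner_def)
lemma cinner_zero_right[simp]: "cinner x 0 = 0" by (simp add: cinner_def)

lemma cnj_mult_self: "cnj z * z = complex_of_real ((cmod z)^2)"
  by (subst complex_norm_square) (rule mult.commute)

lemma cinner_self: "cinner x x = complex_of_real ((norm x)^2)"
proof -
  have "cinner x x = (\<Sum>i\<in>UNIV. complex_of_real ((cmod (x$i))^2))"
    unfolding cinner_def by (simp only: cnj_mult_self)
  also have "\<dots> = complex_of_real (\<Sum>i\<in>UNIV. (cmod (x$i))^2)" by (simp only: of_real_sum)
  also have "(\<Sum>i\<in>UNIV. (cmod (x$i))^2) = (norm x)^2"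
    unfolding norm_vec_def L2_set_def by (subst real_sqrt_pow2) (auto intro: sum_nonneg)
  finally show ?thesis .
qed

lemma cinner_self_eq0: "cinner x x = 0 \<longleftrightarrow> x = 0"
  by (simp add: cinner_self)

lemma cadj_adj: "cinner (M *v x) y = cinner x (cadj M *v y)"
proof -
  have "cinner (M *v x) y = (\<Sum>i\<in>UNIV. \<Sum>j\<in>UNIV. cnj (M$i$j) * cnj (x$j) * y$i)"
    by (simp add: cinner_def matrix_vector_mult_def sum_distrib_right)
  also have "\<dots> = (\<Sum>j\<in>UNIV. \<Sum>i\<in>UNIV. cnj (M$i$j) * cnj (x$j) * y$i)"
    by (rule sum.swap)
  also have "\<dots> = cinner x (cadj M *v y)"
    by (simp add: cinner_def cadj_def matrix_vector_mult_def sum_distrib_left mult_ac)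
  finally show ?thesis .
qed

lemma cinner_sum_right: "cinner z (sum f S) = (\<Sum>i\<in>S. cinner z (f i))"
  by (induct S rule: infinite_finite_induct) (simp_all add: cinner_add_right)

lemma cinner_axis: "cinner y (axis m 1) = cnj (y$m)"
  unfolding cinner_def axis_def by (simp add: if_distrib sum.delta cong: if_cong)

lemma mv_scale: "A *v (c *s x) = c *s (A *v (x::complex^'n::finite))"
  by (simp add: vec_eq_iff matrix_vector_mult_def sum_distrib_left mult_ac)

lemma norm_cscale: "norm (c *s (x::complex^'n::finite)) = cmod c * norm x"
proof -
  have "complex_of_real ((norm (c *s x))^2) = complex_of_real ((cmod c * norm x)^2)"
    by (simp only: cinner_self[symmetric] cinner_scale_left cinner_scale_right)
       (simp add: cinner_self complex_norm_square[symmetric] power_mult_distrib mult.assoc)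
  hence "(norm (c *s x))^2 = (cmod c * norm x)^2" by (simp only: of_real_eq_iff)
  thus ?thesis by (rule power2_eq_imp_eq) auto
qed

lemma herm_inner: "hermitian A \<Longrightarrow> cinner (A *v x) y = cinner x (A *v y)"
  by (simp add: cadj_adj hermitian_def)

lemma qform_cinner: "qform A x = cinner x (A *v x)"
  by (simp add: qform_def cinner_def matrix_vector_mult_def sum_distrib_left mult.assoc)

lemma quad_zero:
  fixes a b :: real
  assumes "\<And>t. t * a + t^2 * b \<le> 0"
  shows "a = 0"
proof (rule ccontr)
  assume a: "a \<noteq> 0"
  define s where "s = 1 / (2 * \<bar>b\<bar> + 2)"
  have s: "s > 0" "s * \<bar>b\<bar> < 1" unfolding s_def by (auto simp: field_simps)
  have "(s * a) * a + (s * a)^2 * b \<le> 0" by (rule assms)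
  hence "s * a^2 * (1 + s * b) \<le> 0" by (simp add: power2_eq_square algebra_simps)
  moreover have "1 + s * b > 0"
  proof -
    have "s * (- \<bar>b\<bar>) \<le> s * b" using s(1) by (intro mult_left_mono) auto
    thus ?thesis using s(2) by linarith
  qed
  moreover have "s * a^2 > 0" using s a by simp
  ultimately have "s * a^2 * (1 + s * b) > 0" "s * a^2 * (1 + s * b) \<le> 0" by (auto intro: mult_pos_pos)
  thus False by linarith
qed

lemma continuous_cinner_right: "continuous_on S (\<lambda>x. cinner z (x::complex^'n::finite))"
  unfolding cinner_def by (intro continuous_intros)

lemma continuous_qform: "continuous_on S (\<lambda>x. Re (cinner x (A *v (x::complex^'n::finite))))"
  unfolding cinner_def matrix_vector_mult_def by (intro continuous_intros)

lemma spectral_step: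
  fixes A :: "complex^'n::finite^'n" and v :: "'n \<Rightarrow> complex^'n"
  assumes herm: "hermitian A" and I: "I \<noteq> UNIV"
   and orth: "\<forall>i\<in>I. \<forall>j\<in>I. cinner (v i) (v j) = (if i = j then 1 else 0)"
   and eig: "\<forall>i\<in>I. A *v v i = complex_of_real (l i) *s v i"
  shows "\<exists>x \<mu>. cinner x x = 1 \<and> (\<forall>i\<in>I. cinner (v i) x = 0) \<and> A *v x = complex_of_real \<mu> *s x"
proof -
  define W where "W = {x. \<forall>i\<in>I. cinner (v i) x = 0}"
  have Wadd: "x + y \<in> W" if "x \<in> W" "y \<in> W" for x y
    using that by (simp add: W_def cinner_add_right)
  have Wdiff: "x - y \<in> W" if "x \<in> W" "y \<in> W" for x y
    using that by (simp add: W_def cinner_diff_right)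
  have Wscale: "c *s x \<in> W" if "x \<in> W" for x c
    using that by (simp add: W_def cinner_scale_right)
  have ne: "\<exists>y\<in>W. y \<noteq> 0"
  proof (rule ccontr)
    assume "\<not> ?thesis"
    hence all0: "\<And>y. y \<in> W \<Longrightarrow> y = 0" by auto
    have decomp: "x = (\<Sum>i\<in>I. cinner (v i) x *s v i)" for x
    proof -
      let ?y = "x - (\<Sum>i\<in>I. cinner (v i) x *s v i)"
      have "?y \<in> W"
        unfolding W_def
      proof (intro CollectI ballI)
        fix k assume k: "k \<in> I"
        have "cinner (v k) (\<Sum>i\<in>I. cinner (v i) x *s v i)
            = (\<Sum>i\<in>I. cinner (v i) x * (if k = i then 1 else 0))"
          using k orth by (simp add: cinner_sum_right cinner_scale_right)
        also have "\<dots> = cinner (v k) x" using k by (simp add: if_distrib sum.delta cong: if_cong)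
        finally show "cinner (v k) ?y = 0" by (simp add: cinner_diff_right)
      qed
      hence "?y = 0" by (rule all0)
      thus ?thesis by simp
    qed
    have one: "1 = (\<Sum>i\<in>I. cnj (v i $ m) * v i $ m)" for m
    proof -
      have "(axis m 1 :: complex^'n) $ m = (\<Sum>i\<in>I. cinner (v i) (axis m 1) *s v i) $ m"
        using decomp[of "axis m 1"] by simp
      thus ?thesis by (simp add: cinner_axis)
    qed
    have "(of_nat CARD('n) :: complex) = (\<Sum>m\<in>UNIV. \<Sum>i\<in>I. cnj (v i $ m) * v i $ m)"
      using one by simp
    also have "\<dots> = (\<Sum>i\<in>I. \<Sum>m\<in>UNIV. cnj (v i $ m) * v i $ m)" by (rule sum.swap)
    also have "\<dots> = (\<Sum>i\<in>I. cinner (v i) (v i))" by (simp add: cinner_def)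
    also have "\<dots> = of_nat (card I)" using orth by simp
    finally have "CARD('n) = card I" by (simp only: of_nat_eq_iff)
    moreover have "card I < CARD('n)" using I by (intro psubset_card_mono) auto
    ultimately show False by simp
  qed
  define S where "S = W \<inter> {x. norm x = 1}"
  have "closed W"
  proof -
    have "W = (\<Inter>i\<in>I. {x. cinner (v i) x = 0})" by (auto simp: W_def)
    also have "closed \<dots>"
      by (intro closed_INT ballI closed_Collect_eq continuous_cinner_right continuous_on_const)
    finally show ?thesis .
  qed
  moreover have "compact {x::complex^'n. norm x = 1}"
  proof -
    have "{x::complex^'n. norm x = 1} = sphere 0 1" by auto
    thus ?thesis by simp
  qed
  ultimately have compS: "compact S" unfolding S_def by (subst Int_commute) (rule compact_Int_closed)
  obtain y where y: "y \<in> W" "y \<noteq> 0" using ne by auto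
  have "complex_of_real (1 / norm y) *s y \<in> S"
    using y by (simp add: S_def Wscale norm_cscale norm_divide)
  hence Sne: "S \<noteq> {}" by auto
  obtain x0 where x0: "x0 \<in> S" and x0max: "\<And>z. z \<in> S \<Longrightarrow> Re (cinner z (A *v z)) \<le> Re (cinner x0 (A *v x0))"
    using continuous_attains_sup[OF compS Sne continuous_qform[of S A]] by blast
  define \<mu> where "\<mu> = Re (cinner x0 (A *v x0))"
  have x0W: "x0 \<in> W" and nx0: "norm x0 = 1" using x0 by (auto simp: S_def)
  have x01: "cinner x0 x0 = 1" using nx0 by (simp add: cinner_self)
  have bound: "Re (cinner z (A *v z)) \<le> \<mu> * (norm z)^2" if zW: "z \<in> W" for z
  proof (cases "z = 0")
    case True thus ?thesis by simp
  next
    case False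
    define r where "r = 1 / norm z"
    have r: "r > 0" "r * norm z = 1" using False by (auto simp: r_def)
    have "complex_of_real r *s z \<in> S" using zW r by (simp add: S_def Wscale norm_cscale norm_divide)
    hence "Re (cinner (complex_of_real r *s z) (A *v (complex_of_real r *s z))) \<le> \<mu>"
      unfolding \<mu>_def by (rule x0max)
    hence le: "r^2 * Re (cinner z (A *v z)) \<le> \<mu>"
      by (simp add: mv_scale cinner_scale_left cinner_scale_right mult.assoc power2_eq_square)
    have e: "r^2 * (\<mu> * (norm z)^2) = \<mu> * (r * norm z)^2" by (simp add: power_mult_distrib)
    have "r^2 * Re (cinner z (A *v z)) \<le> r^2 * (\<mu> * (norm z)^2)"
      using le r(2) unfolding e by simp
    moreover have "r^2 > 0" using r by simp
    ultimately show ?thesis by simp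
  qed
  have key: "Re (cinner (A *v x0) w) = 0" if wW: "w \<in> W" and w0: "cinner x0 w = 0" for w
  proof -
    have w0': "cinner w x0 = 0" using w0 cinner_cnj[of x0 w] by simp
    define a where "a = Re (cinner x0 (A *v w)) + Re (cinner w (A *v x0))"
    define b where "b = Re (cinner w (A *v w)) - \<mu> * (norm w)^2"
    have "t * a + t^2 * b \<le> 0" for t :: real
    proof -
      let ?z = "x0 + complex_of_real t *s w"
      have "?z \<in> W" using x0W wW by (intro Wadd Wscale)
      hence B: "Re (cinner ?z (A *v ?z)) \<le> \<mu> * (norm ?z)^2" by (rule bound)
      have E1: "cinner ?z (A *v ?z) = cinner x0 (A *v x0) + complex_of_real t * cinner x0 (A *v w)
          + complex_of_real t * cinner w (A *v x0) + complex_of_real (t^2) * cinner w (A *v w)"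
        by (simp add: matrix_vector_right_distrib mv_scale cinner_add_left cinner_add_right
            cinner_scale_left cinner_scale_right algebra_simps power2_eq_square)
      have E2: "cinner ?z ?z = 1 + complex_of_real (t^2) * cinner w w"
        using x01 w0 w0' by (simp add: cinner_add_left cinner_add_right
            cinner_scale_left cinner_scale_right algebra_simps power2_eq_square)
      have N: "(norm ?z)^2 = 1 + t^2 * (norm w)^2"
      proof -
        have "complex_of_real ((norm ?z)^2) = complex_of_real (1 + t^2 * (norm w)^2)"
          using E2 unfolding cinner_self by (simp only: of_real_add of_real_mult of_real_1)
        thus ?thesis by (simp only: of_real_eq_iff)
      qed
      show ?thesis using B unfolding E1 N a_def b_def \<mu>_def by (simp add: algebra_simps)
    qed
    hence "a = 0" by (rule quad_zero)
    moreover have "cinner x0 (A *v w) = cinner (A *v x0) w" using herm_inner[OF herm] by simp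
    moreover have "cinner w (A *v x0) = cnj (cinner (A *v x0) w)" by (simp add: cinner_cnj)
    ultimately show ?thesis unfolding a_def by simp
  qed
  define c where "c = cinner x0 (A *v x0)"
  define r where "r = A *v x0 - c *s x0"
  have AW: "A *v x0 \<in> W" unfolding W_def
  proof (intro CollectI ballI)
    fix i assume i: "i \<in> I"
    have "cinner (v i) (A *v x0) = cinner (A *v v i) x0" using herm_inner[OF herm] by simp
    also have "\<dots> = 0" using i eig x0W by (simp add: cinner_scale_left W_def)
    finally show "cinner (v i) (A *v x0) = 0" .
  qed
  have rW: "r \<in> W" unfolding r_def using AW x0W by (intro Wdiff Wscale)
  have r0: "cinner x0 r = 0" unfolding r_def using x01 by (simp add: cinner_diff_right cinner_scale_right c_def)
  have k1: "Re (cinner (A *v x0) r) = 0" using key[OF rW r0] .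
  have k2: "Re (cinner (A *v x0) (\<i> *s r)) = 0"
    using key[OF Wscale[of r "\<i>", OF rW]] r0 by (simp add: cinner_scale_right)
  have "cinner (A *v x0) r = 0" using k1 k2 by (simp add: cinner_scale_right complex_eq_iff)
  hence "cinner r r = 0" using r0
    by (simp add: r_def cinner_diff_left cinner_scale_left)
  hence "r = 0" by (simp add: cinner_self_eq0)
  hence Ax0: "A *v x0 = c *s x0" by (simp add: r_def)
  have "cnj c = c" unfolding c_def using herm_inner[OF herm, of x0 x0] cinner_cnj[of x0 "A *v x0"] by simp
  hence "c = complex_of_real (Re c)" by (simp add: complex_eq_iff)
  hence "A *v x0 = complex_of_real (Re c) *s x0" using Ax0 by simp
  moreover have "\<forall>i\<in>I. cinner (v i) x0 = 0" using x0W by (simp add: W_def)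
  ultimately show ?thesis using x01 by blast
qed

lemma mult_dg_nth: "(X ** dg d) $ i $ j = X $ i $ j * d j"
proof -
  have "(X ** dg d) $ i $ j = (\<Sum>k\<in>UNIV. if k = j then X$i$k * d k else 0)"
    unfolding matrix_matrix_mult_def dg_def by (simp add: if_distrib cong: if_cong)
  also have "\<dots> = X $ i $ j * d j" by (simp add: sum.delta')
  finally show ?thesis .
qed

lemma dg_mult_nth: "(dg d ** X) $ i $ j = d i * X $ i $ j"
proof -
  have "(dg d ** X) $ i $ j = (\<Sum>k\<in>UNIV. if i = k then d k * X$k$j else 0)"
    unfolding matrix_matrix_mult_def dg_def vec_lambda_beta by (rule sum.cong) auto
  also have "\<dots> = d i * X $ i $ j" by (simp add: sum.delta')
  finally show ?thesis .
qed

lemma dg_nth: "dg d $ i $ j = (if i = j then d i else 0)"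
  by (simp add: dg_def)

lemma dg_mult: "dg a ** dg b = dg (\<lambda>i. a i * b i)"
  by (simp add: vec_eq_iff mult_dg_nth dg_nth)

lemma cadj_nth: "cadj A $ i $ j = cnj (A $ j $ i)"
  by (simp add: cadj_def)

lemma cadj_mult: "cadj (A ** B) = cadj B ** cadj (A :: complex^'n::finite^'n)"
proof -
  have "cadj (A ** B) $ i $ j = (cadj B ** cadj A) $ i $ j" for i j
    unfolding cadj_nth matrix_matrix_mult_def vec_lambda_beta cnj_sum complex_cnj_mult
    by (simp add: mult.commute)
  thus ?thesis by (simp add: vec_eq_iff)
qed

lemma cadj_cadj[simp]: "cadj (cadj A) = A"
  by (simp add: vec_eq_iff cadj_nth)

lemma cadj_dg: "cadj (dg d) = dg (\<lambda>i. cnj (d i))"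
  by (simp add: vec_eq_iff cadj_nth dg_nth)

lemma dg_1: "dg (\<lambda>i. 1) = mat 1"
  by (simp add: vec_eq_iff dg_nth mat_def)

lemma cadj_mat1[simp]: "cadj (mat 1) = mat 1"
  by (simp add: vec_eq_iff cadj_nth mat_def)

lemma spectral_vecs:
  fixes A :: "complex^'n::finite^'n"
  assumes herm: "hermitian A"
  shows "\<exists>(v::'n \<Rightarrow> complex^'n) l. (\<forall>i j. cinner (v i) (v j) = (if i = j then 1 else 0)) \<and>
               (\<forall>i. A *v v i = complex_of_real (l i) *s v i)"
proof -
  have "\<exists>v l. (\<forall>i\<in>I. \<forall>j\<in>I. cinner (v i) (v j) = (if i = j then 1 else 0)) \<and>
               (\<forall>i\<in>I. A *v v i = complex_of_real (l i) *s v i)" for I :: "'n set"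
  proof (induct I rule: finite_induct[OF finite])
    case 1 show ?case by simp
  next
    case (2 x F)
    then obtain v l where orth: "\<forall>i\<in>F. \<forall>j\<in>F. cinner (v i) (v j) = (if i = j then 1 else 0)"
      and eig: "\<forall>i\<in>F. A *v v i = complex_of_real (l i) *s v i" by blast
    have "F \<noteq> UNIV" using 2 by auto
    from spectral_step[OF herm this orth eig] obtain x0 \<mu> where
      x0: "cinner x0 x0 = 1" "\<forall>i\<in>F. cinner (v i) x0 = 0" "A *v x0 = complex_of_real \<mu> *s x0"
      by blast
    have x0': "\<forall>i\<in>F. cinner x0 (v i) = 0" using x0(2) cinner_cnj by (metis complex_cnj_zero)
    show ?case
    proof (intro exI conjI ballI)
      fix i j assume i: "i \<in> insert x F" and j: "j \<in> insert x F"
      show "cinner ((v(x:=x0)) i) ((v(x:=x0)) j) = (if i = j then 1 else 0)"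
      proof (cases "i = x")
        case True
        thus ?thesis
        proof (cases "j = x")
          case True thus ?thesis using \<open>i = x\<close> x0(1) by simp
        next
          case False thus ?thesis using \<open>i = x\<close> j x0' by simp
        qed
      next
        case False
        hence iF: "i \<in> F" using i by simp
        thus ?thesis
        proof (cases "j = x")
          case True thus ?thesis using \<open>i \<noteq> x\<close> iF x0(2) by simp
        next
          case False thus ?thesis using \<open>i \<noteq> x\<close> iF j orth by simp
        qed
      qed
    next
      fix i assume i: "i \<in> insert x F"
      show "A *v (v(x:=x0)) i = complex_of_real ((l(x:=\<mu>)) i) *s (v(x:=x0)) i"
        using i eig x0(3) by (cases "i = x") simp_all
    qed
  qed
  from this[of UNIV] show ?thesis by blast
qed

theorem spectral:
  fixes A :: "complex^'n::finite^'n"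
  assumes herm: "hermitian A"
  shows "\<exists>U l. cadj U ** U = mat 1 \<and> U ** cadj U = mat 1 \<and>
           A = U ** dg (\<lambda>i. complex_of_real (l i)) ** cadj U"
proof -
  obtain v :: "'n \<Rightarrow> complex^'n" and l :: "'n \<Rightarrow> real" where orth: "\<And>i j. cinner (v i) (v j) = (if i = j then 1 else 0)"
    and eig: "\<And>i. A *v v i = complex_of_real (l i) *s v i" using spectral_vecs[OF herm] by blast
  define U :: "complex^'n^'n" where "U = (\<chi> i j. v j $ i)"
  have UU: "cadj U ** U = mat 1"
  proof -
    have "(cadj U ** U) $ i $ j = cinner (v i) (v j)" for i j
      by (simp add: U_def cadj_nth matrix_matrix_mult_def cinner_def)
    thus ?thesis using orth by (simp add: vec_eq_iff mat_def)
  qed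
  hence UU': "U ** cadj U = mat 1" by (simp add: matrix_left_right_inverse)
  have AU: "A ** U = U ** dg (\<lambda>i. complex_of_real (l i))"
  proof -
    have "(A ** U) $ i $ j = (A *v v j) $ i" for i j
      by (simp add: U_def matrix_matrix_mult_def matrix_vector_mult_def)
    moreover have "(U ** dg (\<lambda>i. complex_of_real (l i))) $ i $ j = complex_of_real (l j) * v j $ i" for i j
      by (simp add: mult_dg_nth U_def mult.commute)
    ultimately show ?thesis using eig by (simp add: vec_eq_iff)
  qed
  have "A = A ** (U ** cadj U)" using UU' by simp
  also have "\<dots> = U ** dg (\<lambda>i. complex_of_real (l i)) ** cadj U" by (simp add: matrix_mul_assoc AU)
  finally show ?thesis using UU UU' by blast
qed

lemma mm_add_right: "(X + Y) ** (Z :: complex^'n::finite^'n) = X ** Z + Y ** Z"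
  by (simp add: vec_eq_iff matrix_matrix_mult_def ring_distribs sum.distrib)

lemma mm_scaleR_left: "(c *\<^sub>R X) ** (Y :: complex^'n::finite^'n) = c *\<^sub>R (X ** Y)"
  by (simp add: vec_eq_iff matrix_matrix_mult_def scaleR_sum_right)

lemma mm_scaleR_right: "X ** (c *\<^sub>R Y :: complex^'n::finite^'n) = c *\<^sub>R (X ** Y)"
  by (simp add: vec_eq_iff matrix_matrix_mult_def scaleR_sum_right)

lemma mpow_conj:
  assumes "cadj U ** U = mat 1" "U ** cadj U = mat 1"
  shows "mpow (U ** D ** cadj U) k = U ** mpow D k ** cadj U"
proof (induct k)
  case 0 show ?case using assms by simp
next
  case (Suc k)
  have "mpow (U ** D ** cadj U) (Suc k) = U ** D ** cadj U ** (U ** mpow D k ** cadj U)"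
    using Suc by simp
  also have "\<dots> = U ** D ** (cadj U ** U) ** mpow D k ** cadj U" by (simp add: matrix_mul_assoc)
  also have "\<dots> = U ** mpow D (Suc k) ** cadj U" using assms by (simp add: matrix_mul_assoc)
  finally show ?case .
qed

lemma mpow_dg: "mpow (dg d) k = dg (\<lambda>i. d i ^ k)"
  by (induct k) (simp_all add: dg_1 dg_mult)

lemma mexp_dg_sums: "(\<lambda>k. (1 / fact k) *\<^sub>R mpow (dg d) k) sums dg (\<lambda>i. exp (d i))"
  unfolding sums_def
proof (rule vec_tendstoI, rule vec_tendstoI)
  fix i j
  show "((\<lambda>n. (\<Sum>k<n. (1 / fact k) *\<^sub>R mpow (dg d) k) $ i $ j) \<longlongrightarrow> dg (\<lambda>i. exp (d i)) $ i $ j) sequentially"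
  proof (cases "i = j")
    case True
    have "(\<lambda>k. d i ^ k /\<^sub>R fact k) sums exp (d i)" by (rule exp_converges)
    hence "(\<lambda>n. \<Sum>k<n. d i ^ k /\<^sub>R fact k) \<longlonglongrightarrow> exp (d i)" by (simp add: sums_def)
    thus ?thesis using True by (simp add: mpow_dg dg_nth divide_inverse_commute)
  next
    case False thus ?thesis by (simp add: mpow_dg dg_nth)
  qed
qed

lemma mexp_dg: "mexp (dg d) = dg (\<lambda>i. exp (d i))"
  unfolding mexp_def using mexp_dg_sums by (rule sums_unique[symmetric])

lemma bl_conj:
  fixes U V :: "complex^'n::finite^'n"
  shows "bounded_linear (\<lambda>X. U ** X ** V)"
proof -
  have "linear (\<lambda>X. U ** X ** V)"
  proof (rule linearI)
    fix b1 b2 show "U ** (b1 + b2) ** V = U ** b1 ** V + U ** b2 ** V"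
      by (simp add: matrix_add_ldistrib mm_add_right)
  next
    fix r b show "U ** (r *\<^sub>R b) ** V = r *\<^sub>R (U ** b ** V)"
      using mm_scaleR_right[of U r b] mm_scaleR_left[of r "U ** b" V] by simp
  qed
  thus ?thesis by (simp add: linear_conv_bounded_linear)
qed

lemma mexp_conj:
  assumes "cadj U ** U = mat 1" "U ** cadj U = mat 1"
  shows "mexp (U ** dg d ** cadj U) = U ** dg (\<lambda>i. exp (d i)) ** cadj U"
proof -
  have "(\<lambda>k. U ** ((1 / fact k) *\<^sub>R mpow (dg d) k) ** cadj U) sums (U ** dg (\<lambda>i. exp (d i)) ** cadj U)"
    by (rule bounded_linear.sums[OF bl_conj mexp_dg_sums])
  moreover have "(\<lambda>k. U ** ((1 / fact k) *\<^sub>R mpow (dg d) k) ** cadj U) = (\<lambda>k. (1 / fact k) *\<^sub>R mpow (U ** dg d ** cadj U) k)"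
    using assms by (simp add: mpow_conj mm_scaleR_left mm_scaleR_right)
  ultimately show ?thesis unfolding mexp_def by (simp add: sums_unique[symmetric])
qed

lemma exp_inj_conj:
  fixes U V :: "complex^'n::finite^'n" and a b :: "'n \<Rightarrow> real"
  assumes U1: "cadj U ** U = mat 1" and U2: "U ** cadj U = mat 1"
    and V1: "cadj V ** V = mat 1" and V2: "V ** cadj V = mat 1"
    and eq: "U ** dg (\<lambda>i. complex_of_real (exp (a i))) ** cadj U = V ** dg (\<lambda>i. complex_of_real (exp (b i))) ** cadj V"
  shows "U ** dg (\<lambda>i. complex_of_real (a i)) ** cadj U = V ** dg (\<lambda>i. complex_of_real (b i)) ** cadj V"
proof -
  define W where "W = cadj V ** U"
  let ?ea = "dg (\<lambda>i. complex_of_real (exp (a i)))"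
  let ?eb = "dg (\<lambda>i. complex_of_real (exp (b i)))"
  have "cadj V ** (U ** ?ea ** cadj U) ** U = cadj V ** U ** ?ea ** (cadj U ** U)"
    by (simp add: matrix_mul_assoc)
  also have "\<dots> = W ** ?ea" using U1 by (simp add: W_def)
  finally have e1: "cadj V ** (U ** ?ea ** cadj U) ** U = W ** ?ea" .
  have "cadj V ** (V ** ?eb ** cadj V) ** U = (cadj V ** V) ** ?eb ** (cadj V ** U)"
    by (simp add: matrix_mul_assoc)
  also have "\<dots> = ?eb ** W" using V1 by (simp add: W_def)
  finally have e2: "cadj V ** (V ** ?eb ** cadj V) ** U = ?eb ** W" .
  have WE: "W ** ?ea = ?eb ** W" using e1 e2 eq by simp
  have WD: "W ** dg (\<lambda>i. complex_of_real (a i)) = dg (\<lambda>i. complex_of_real (b i)) ** W"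
  proof -
    have "W $ i $ j * complex_of_real (a j) = complex_of_real (b i) * W $ i $ j" for i j
    proof (cases "W $ i $ j = 0")
      case True thus ?thesis by simp
    next
      case False
      have "W $ i $ j * complex_of_real (exp (a j)) = complex_of_real (exp (b i)) * W $ i $ j"
        using WE[THEN arg_cong[where f="\<lambda>M. M $ i $ j"]] by (simp add: mult_dg_nth dg_mult_nth)
      hence "exp (a j) = exp (b i)" using False by (simp add: mult.commute)
      hence "a j = b i" by simp
      thus ?thesis by (simp add: mult.commute)
    qed
    thus ?thesis by (simp add: vec_eq_iff mult_dg_nth dg_mult_nth)
  qed
  have VW: "V ** W = U" unfolding W_def using V2 by (simp add: matrix_mul_assoc)
  have "U ** dg (\<lambda>i. complex_of_real (a i)) ** cadj U = V ** (W ** dg (\<lambda>i. complex_of_real (a i))) ** cadj U"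
    using VW by (simp add: matrix_mul_assoc)
  also have "\<dots> = V ** (dg (\<lambda>i. complex_of_real (b i)) ** W) ** cadj U"
    by (simp only: WD)
  also have "\<dots> = V ** dg (\<lambda>i. complex_of_real (b i)) ** cadj V ** (U ** cadj U)"
    by (simp add: W_def matrix_mul_assoc)
  also have "\<dots> = V ** dg (\<lambda>i. complex_of_real (b i)) ** cadj V" using U2 by simp
  finally show ?thesis .
qed

lemma herm_conj:
  fixes U :: "complex^'n::finite^'n"
  shows "hermitian (U ** dg (\<lambda>i. complex_of_real (a i)) ** cadj U)"
  unfolding hermitian_def by (simp add: cadj_mult cadj_dg matrix_mul_assoc)

lemma mexp_conj_real:
  fixes U :: "complex^'n::finite^'n"
  assumes "cadj U ** U = mat 1" "U ** cadj U = mat 1"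
  shows "mexp (U ** dg (\<lambda>i. complex_of_real (a i)) ** cadj U) = U ** dg (\<lambda>i. complex_of_real (exp (a i))) ** cadj U"
  using mexp_conj[OF assms, of "\<lambda>i. complex_of_real (a i)"] by (simp add: exp_of_real)

lemma mlog_conj:
  fixes U :: "complex^'n::finite^'n"
  assumes U1: "cadj U ** U = mat 1" and U2: "U ** cadj U = mat 1" and pos: "\<And>i. l i > 0"
  shows "mlog (U ** dg (\<lambda>i. complex_of_real (l i)) ** cadj U) = U ** dg (\<lambda>i. complex_of_real (ln (l i))) ** cadj U"
  unfolding mlog_def
proof (rule the_equality)
  show "hermitian (U ** dg (\<lambda>i. complex_of_real (ln (l i))) ** cadj U) \<and>
    mexp (U ** dg (\<lambda>i. complex_of_real (ln (l i))) ** cadj U) = U ** dg (\<lambda>i. complex_of_real (l i)) ** cadj U"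
    using pos by (simp add: herm_conj mexp_conj_real[OF U1 U2])
next
  fix L assume L: "hermitian L \<and> mexp L = U ** dg (\<lambda>i. complex_of_real (l i)) ** cadj U"
  obtain V b where V1: "cadj V ** V = mat 1" and V2: "V ** cadj V = mat 1"
    and Lv: "L = V ** dg (\<lambda>i. complex_of_real (b i)) ** cadj V" using spectral L by blast
  have "V ** dg (\<lambda>i. complex_of_real (exp (b i))) ** cadj V = U ** dg (\<lambda>i. complex_of_real (exp (ln (l i)))) ** cadj U"
    using L pos unfolding Lv by (simp add: mexp_conj_real[OF V1 V2])
  from exp_inj_conj[OF V1 V2 U1 U2 this] show "L = U ** dg (\<lambda>i. complex_of_real (ln (l i))) ** cadj U"
    using Lv by simp
qed

lemma density_spec:
  fixes \<rho> :: "complex^'n::finite^'n"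
  assumes dens: "\<rho> \<in> density" and nonsing: "det \<rho> \<noteq> 0"
  shows "\<exists>U l. cadj U ** U = mat 1 \<and> U ** cadj U = mat 1 \<and> (\<forall>i. l i > 0) \<and>
           \<rho> = U ** dg (\<lambda>i. complex_of_real (l i)) ** cadj U"
proof -
  have psd: "psd \<rho>" using dens by (simp add: density_def)
  hence "hermitian \<rho>" by (simp add: psd_def)
  then obtain U l where U1: "cadj U ** U = mat 1" and U2: "U ** cadj U = mat 1"
    and rho: "\<rho> = U ** dg (\<lambda>i. complex_of_real (l i)) ** cadj U" using spectral by blast
  have rU: "\<rho> ** U = U ** dg (\<lambda>i. complex_of_real (l i))"
    unfolding rho using U1 by (simp add: matrix_mul_assoc[symmetric])
  obtain B where B: "B ** \<rho> = mat 1"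
    using nonsing invertible_det_nz invertible_left_inverse by blast
  have "l j > 0" for j
  proof -
    define u where "u = (\<chi> i. U $ i $ j)"
    have ru: "\<rho> *v u = complex_of_real (l j) *s u"
    proof -
      have "(\<rho> *v u) $ i = (complex_of_real (l j) *s u) $ i" for i
      proof -
        have "(\<rho> *v u) $ i = (\<rho> ** U) $ i $ j"
          by (simp add: u_def matrix_vector_mult_def matrix_matrix_mult_def)
        also have "\<dots> = (complex_of_real (l j) *s u) $ i" unfolding rU
          by (simp add: mult_dg_nth u_def mult.commute)
        finally show ?thesis .
      qed
      thus ?thesis by (simp add: vec_eq_iff)
    qed
    have uu: "cinner u u = 1"
      using U1[THEN arg_cong[where f="\<lambda>M. M $ j $ j"]]
      by (simp add: u_def cinner_def matrix_matrix_mult_def cadj_nth mat_def)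
    have "qform \<rho> u = complex_of_real (l j)"
      by (simp add: qform_cinner ru cinner_scale_right uu)
    hence ge: "l j \<ge> 0" using psd unfolding psd_def by (metis Re_complex_of_real)
    have "l j \<noteq> 0"
    proof
      assume "l j = 0"
      hence "\<rho> *v u = 0" using ru by (simp add: vec_eq_iff)
      hence "B *v (\<rho> *v u) = 0" by simp
      hence "u = 0" using B by (simp add: matrix_vector_mul_assoc)
      thus False using uu by simp
    qed
    thus ?thesis using ge by simp
  qed
  thus ?thesis using U1 U2 rho by blast
qed

definition Em :: "'n::finite \<Rightarrow> 'n \<Rightarrow> complex \<Rightarrow> complex^'n^'n" where
  "Em i j c = (\<chi> a b. if a = i \<and> b = j then c else 0)"

lemma cadj_add: "cadj (A + B) = cadj A + cadj B"
  by (simp add: vec_eq_iff cadj_nth)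

lemma cadj_diff: "cadj (A - B) = cadj A - cadj B"
  by (simp add: vec_eq_iff cadj_nth)

lemma cadj_scaleR: "cadj (t *\<^sub>R A) = t *\<^sub>R cadj A"
  by (simp add: vec_eq_iff cadj_nth)

lemma cadj_Em: "cadj (Em i j c) = Em j i (cnj c)"
  by (auto simp: vec_eq_iff cadj_nth Em_def)

lemma trace_Em: "trace (Em i j c) = (if i = j then c else 0)"
proof (cases "i = j")
  case True thus ?thesis by (simp add: trace_def Em_def)
next
  case False
  thus ?thesis unfolding trace_def by (simp, intro sum.neutral) (auto simp: Em_def)
qed

lemma trace_mult_Em: "trace (G ** Em i j c) = c * G $ j $ i"
proof -
  have "trace (G ** Em i j c) = (\<Sum>a\<in>UNIV. (G ** Em i j c) $ a $ a)" by (simp add: trace_def)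
  also have "\<dots> = (\<Sum>a\<in>UNIV. if a = j then c * G $ j $ i else 0)"
  proof (rule sum.cong[OF refl])
    fix a
    have "(G ** Em i j c) $ a $ a = (\<Sum>k\<in>UNIV. if k = i then (if a = j then c * G $ a $ k else 0) else 0)"
      unfolding matrix_matrix_mult_def Em_def vec_lambda_beta by (rule sum.cong) auto
    also have "\<dots> = (if a = j then c * G $ j $ i else 0)" by (simp add: sum.delta)
    finally show "(G ** Em i j c) $ a $ a = (if a = j then c * G $ j $ i else 0)" .
  qed
  also have "\<dots> = c * G $ j $ i" by (simp add: sum.delta)
  finally show ?thesis .
qed

lemma trace_mult_add: "trace (G ** (A + B)) = trace (G ** A) + trace (G ** (B::complex^'n::finite^'n))"
  by (simp add: matrix_add_ldistrib trace_add)

lemma trace_scaleR: "trace (t *\<^sub>R (A::complex^'n::finite^'n)) = t *\<^sub>R trace A"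
  by (simp add: trace_def scaleR_sum_right)

lemma grad_const_of_orth:
  fixes G :: "complex^'n::finite^'n"
  assumes herm: "hermitian G"
    and orth: "\<And>H. hermitian H \<Longrightarrow> trace H = 0 \<Longrightarrow> Re (trace (G ** H)) = 0"
  shows "\<exists>c::real. G = mat (complex_of_real c)"
proof -
  have Gc: "G $ j $ i = cnj (G $ i $ j)" for i j
    using herm unfolding hermitian_def by (metis cadj_nth)
  have off: "G $ i $ j = 0" if ij: "i \<noteq> j" for i j
  proof -
    have "hermitian (Em i j 1 + Em j i 1)" unfolding hermitian_def
      by (simp add: cadj_add cadj_Em add.commute)
    moreover have "trace (Em i j 1 + Em j i 1) = 0" using ij by (simp add: trace_add trace_Em)
    ultimately have "Re (trace (G ** (Em i j 1 + Em j i 1))) = 0" by (rule orth)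
    hence 1: "Re (G $ j $ i + G $ i $ j) = 0" by (simp add: trace_mult_add trace_mult_Em)
    have "hermitian (Em i j \<i> + Em j i (- \<i>))" unfolding hermitian_def
      by (simp add: cadj_add cadj_Em add.commute)
    moreover have "trace (Em i j \<i> + Em j i (- \<i>)) = 0" using ij by (simp add: trace_add trace_Em)
    ultimately have "Re (trace (G ** (Em i j \<i> + Em j i (- \<i>)))) = 0" by (rule orth)
    hence 2: "Re (\<i> * G $ j $ i - \<i> * G $ i $ j) = 0" by (simp add: trace_mult_add trace_mult_Em)
    show ?thesis using 1 2 Gc[of i j] by (simp add: complex_eq_iff)
  qed
  have diag: "G $ i $ i = complex_of_real (Re (G $ j $ j))" for i j
  proof -
    have "hermitian (Em i i 1 + Em j j (-1))" unfolding hermitian_def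
      by (simp add: cadj_add cadj_Em)
    moreover have "trace (Em i i 1 + Em j j (- 1)) = 0" by (simp add: trace_add trace_Em)
    ultimately have "Re (trace (G ** (Em i i 1 + Em j j (- 1)))) = 0" by (rule orth)
    hence 1: "Re (G $ i $ i - G $ j $ j) = 0" by (simp add: trace_mult_add trace_mult_Em)
    show ?thesis using 1 Gc[of i i] Gc[of j j] by (simp add: complex_eq_iff)
  qed
  have "G = mat (complex_of_real (Re (G $ undefined $ undefined)))"
    using off diag by (auto simp: vec_eq_iff mat_def)
  thus ?thesis by blast
qed

lemma qform_add: "qform (A + B) x = qform A x + qform B x"
  by (simp add: qform_def sum.distrib ring_distribs)

lemma nth_scaleR_c: "(t *\<^sub>R A) $ i $ j = complex_of_real t * (A :: complex^'n::finite^'n) $ i $ j"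
proof -
  have "(t *\<^sub>R A) $ i $ j = t *\<^sub>R (A $ i $ j)" by simp
  also have "\<dots> = complex_of_real t * A $ i $ j" by (simp add: scaleR_conv_of_real)
  finally show ?thesis .
qed

lemma qform_scaleR: "qform (t *\<^sub>R A) x = complex_of_real t * qform A x"
  unfolding qform_def nth_scaleR_c by (simp add: sum_distrib_left mult_ac)

lemma Im_qform_herm: "hermitian A \<Longrightarrow> Im (qform A x) = 0"
proof -
  assume h: "hermitian A"
  have "cnj (qform A x) = qform A x"
    unfolding qform_cinner using cinner_cnj[of x "A *v x"] herm_inner[OF h, of x x] by simp
  thus ?thesis by (simp add: complex_eq_iff)
qed

lemma herm_add: "hermitian A \<Longrightarrow> hermitian B \<Longrightarrow> hermitian (A + B)"
  by (simp add: hermitian_def cadj_add)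

lemma herm_scaleR: "hermitian A \<Longrightarrow> hermitian (t *\<^sub>R A)"
  by (simp add: hermitian_def cadj_scaleR)

lemma herm_diff: "hermitian A \<Longrightarrow> hermitian B \<Longrightarrow> hermitian (A - B)"
  by (simp add: hermitian_def cadj_diff)

lemma sum_cmod_sq: "(\<Sum>i\<in>UNIV. (cmod (y$i))^2) = (norm y)^2"
  unfolding norm_vec_def L2_set_def by (subst real_sqrt_pow2) (auto intro: sum_nonneg)

lemma dg_mv: "(dg d *v y) $ i = d i * y $ i"
proof -
  have "(dg d *v y) $ i = (\<Sum>j\<in>UNIV. if i = j then d j * y $ j else 0)"
    unfolding matrix_vector_mult_def dg_def vec_lambda_beta by (rule sum.cong) auto
  thus ?thesis by (simp add: sum.delta)
qed

lemma qform_lower: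
  fixes U :: "complex^'n::finite^'n"
  assumes U1: "cadj U ** U = mat 1" and U2: "U ** cadj U = mat 1"
    and m: "\<And>i. m \<le> l i"
  shows "m * (norm x)^2 \<le> Re (qform (U ** dg (\<lambda>i. complex_of_real (l i)) ** cadj U) x)"
proof -
  define y where "y = cadj U *v x"
  have "qform (U ** dg (\<lambda>i. complex_of_real (l i)) ** cadj U) x
      = cinner x (U *v (dg (\<lambda>i. complex_of_real (l i)) *v y))"
    by (simp add: qform_cinner y_def matrix_vector_mul_assoc matrix_mul_assoc)
  also have "\<dots> = cinner y (dg (\<lambda>i. complex_of_real (l i)) *v y)"
    using cadj_adj[of "cadj U" x] by (simp add: y_def)
  also have "\<dots> = (\<Sum>i\<in>UNIV. complex_of_real (l i * (cmod (y$i))^2))"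
    unfolding cinner_def dg_mv
  proof (rule sum.cong[OF refl])
    fix i
    have "cnj (y$i) * (complex_of_real (l i) * y$i) = complex_of_real (l i) * (cnj (y$i) * y$i)"
      by (simp add: mult_ac)
    also have "\<dots> = complex_of_real (l i) * complex_of_real ((cmod (y$i))^2)" by (simp only: cnj_mult_self)
    also have "\<dots> = complex_of_real (l i * (cmod (y$i))^2)" by (simp only: of_real_mult)
    finally show "cnj (y$i) * (complex_of_real (l i) * y$i) = complex_of_real (l i * (cmod (y$i))^2)" .
  qed
  finally have q: "Re (qform (U ** dg (\<lambda>i. complex_of_real (l i)) ** cadj U) x) = (\<Sum>i\<in>UNIV. l i * (cmod (y$i))^2)"
    by simp
  have ny: "(norm y)^2 = (norm x)^2"
  proof -
    have "cinner y y = cinner x (U *v (cadj U *v x))"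
      using cadj_adj[of "cadj U" x] by (simp add: y_def)
    also have "\<dots> = cinner x x" using U2 by (simp add: matrix_vector_mul_assoc)
    finally have "complex_of_real ((norm y)^2) = complex_of_real ((norm x)^2)" by (simp only: cinner_self)
    thus ?thesis by (simp only: of_real_eq_iff)
  qed
  have "m * (norm x)^2 = (\<Sum>i\<in>UNIV. m * (cmod (y$i))^2)"
    by (simp add: sum_distrib_left[symmetric] sum_cmod_sq ny)
  also have "\<dots> \<le> (\<Sum>i\<in>UNIV. l i * (cmod (y$i))^2)"
    by (intro sum_mono mult_right_mono m) simp
  finally show ?thesis using q by simp
qed

lemma qform_upper:
  "\<bar>Re (qform H x)\<bar> \<le> (\<Sum>i\<in>UNIV. \<Sum>j\<in>UNIV. cmod (H$i$j)) * (norm x)^2"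
proof -
  have "\<bar>Re (qform H x)\<bar> \<le> cmod (qform H x)" by (rule abs_Re_le_cmod)
  also have "\<dots> \<le> (\<Sum>i\<in>UNIV. \<Sum>j\<in>UNIV. cmod (cnj (x $ i) * H $ i $ j * x $ j))"
    unfolding qform_def by (intro order.trans[OF norm_sum] sum_mono norm_sum)
  also have "\<dots> \<le> (\<Sum>i\<in>UNIV. \<Sum>j\<in>UNIV. cmod (H$i$j) * (norm x)^2)"
  proof (intro sum_mono)
    fix i j
    have "cmod (cnj (x $ i) * H $ i $ j * x $ j) = cmod (x$i) * cmod (H$i$j) * cmod (x$j)"
      by (simp add: norm_mult)
    also have "\<dots> \<le> norm x * cmod (H$i$j) * norm x"
      using Finite_Cartesian_Product.norm_nth_le[of x i] Finite_Cartesian_Product.norm_nth_le[of x j] by (intro mult_mono) auto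
    finally show "cmod (cnj (x $ i) * H $ i $ j * x $ j) \<le> cmod (H$i$j) * (norm x)^2"
      by (simp add: power2_eq_square mult_ac)
  qed
  also have "\<dots> = (\<Sum>i\<in>UNIV. \<Sum>j\<in>UNIV. cmod (H$i$j)) * (norm x)^2"
    by (simp add: sum_distrib_right)
  finally show ?thesis .
qed

lemma pd_perturb:
  fixes U \<rho> H :: "complex^'n::finite^'n"
  assumes U1: "cadj U ** U = mat 1" and U2: "U ** cadj U = mat 1"
    and pos: "\<And>i. l i > 0" and rho: "\<rho> = U ** dg (\<lambda>i. complex_of_real (l i)) ** cadj U"
    and tr: "trace \<rho> = 1" and hH: "hermitian H" and trH: "trace H = 0"
  shows "\<exists>\<delta>>0. \<forall>t. \<bar>t\<bar> < \<delta> \<longrightarrow> \<rho> + t *\<^sub>R H \<in> density"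
proof -
  define m where "m = Min (range l)"
  have m0: "m > 0" unfolding m_def using pos by (subst Min_gr_iff) auto
  have ml: "m \<le> l i" for i unfolding m_def by (rule Min_le) auto
  define K where "K = (\<Sum>i\<in>UNIV. \<Sum>j\<in>UNIV. cmod (H$i$j))"
  have K0: "K \<ge> 0" unfolding K_def by (intro sum_nonneg) auto
  define \<delta> where "\<delta> = m / (K + 1)"
  have d0: "\<delta> > 0" unfolding \<delta>_def using m0 K0 by simp
  have hr: "hermitian \<rho>" unfolding rho by (rule herm_conj)
  have "\<rho> + t *\<^sub>R H \<in> density" if t: "\<bar>t\<bar> < \<delta>" for t
  proof -
    have tK: "\<bar>t\<bar> * K \<le> m"
    proof -
      have "\<bar>t\<bar> * (K + 1) < m" using t K0 unfolding \<delta>_def by (simp add: field_simps)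
      thus ?thesis using K0 by (simp add: algebra_simps)
    qed
    have herm: "hermitian (\<rho> + t *\<^sub>R H)" using hr hH by (intro herm_add herm_scaleR)
    have "Im (qform (\<rho> + t *\<^sub>R H) x) = 0 \<and> 0 \<le> Re (qform (\<rho> + t *\<^sub>R H) x)" for x
    proof
      show "Im (qform (\<rho> + t *\<^sub>R H) x) = 0" using herm by (rule Im_qform_herm)
      have lo: "m * (norm x)^2 \<le> Re (qform \<rho> x)" unfolding rho by (rule qform_lower[OF U1 U2 ml])
      have up: "\<bar>Re (qform H x)\<bar> \<le> K * (norm x)^2" unfolding K_def by (rule qform_upper)
      have "\<bar>t * Re (qform H x)\<bar> \<le> \<bar>t\<bar> * (K * (norm x)^2)"
        by (simp add: abs_mult mult_left_mono[OF up])
      also have "\<dots> \<le> m * (norm x)^2" using tK by (simp add: mult.assoc[symmetric] mult_right_mono)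
      finally have "- (m * (norm x)^2) \<le> t * Re (qform H x)" by linarith
      hence "0 \<le> Re (qform \<rho> x) + t * Re (qform H x)" using lo by linarith
      thus "0 \<le> Re (qform (\<rho> + t *\<^sub>R H) x)" by (simp add: qform_add qform_scaleR)
    qed
    hence "psd (\<rho> + t *\<^sub>R H)" using herm by (simp add: psd_def)
    moreover have "trace (\<rho> + t *\<^sub>R H) = 1" using tr trH by (simp add: trace_add trace_scaleR)
    ultimately show ?thesis by (simp add: density_def)
  qed
  thus ?thesis using d0 by blast
qed

lemma line_deriv:
  fixes \<rho> H G :: "complex^'n::finite^'n"
  assumes hr: "hermitian \<rho>" and hH: "hermitian H" and grad: "is_gradient f \<rho> G"
  shows "((\<lambda>t. f (\<rho> + t *\<^sub>R H)) has_real_derivative Re (trace (cadj G ** H))) (at 0)"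
proof -
  have d1: "((\<lambda>t::real. \<rho> + t *\<^sub>R H) has_derivative (\<lambda>t. t *\<^sub>R H)) (at 0 within UNIV)"
    by (auto intro!: derivative_eq_intros)
  have "(f has_derivative (\<lambda>X. Re (trace (cadj G ** X)))) (at \<rho> within {A. hermitian A})"
    using grad by (simp add: is_gradient_def)
  moreover have "(\<lambda>t::real. \<rho> + t *\<^sub>R H) ` UNIV \<subseteq> {A. hermitian A}"
    using hr hH by (auto intro: herm_add herm_scaleR)
  ultimately have d2: "(f has_derivative (\<lambda>X. Re (trace (cadj G ** X))))
      (at ((\<lambda>t::real. \<rho> + t *\<^sub>R H) 0) within (\<lambda>t::real. \<rho> + t *\<^sub>R H) ` UNIV)"
    by (simp add: has_derivative_subset)
  have "((\<lambda>t. f (\<rho> + t *\<^sub>R H)) has_derivative (\<lambda>t. Re (trace (cadj G ** (t *\<^sub>R H))))) (at 0 within UNIV)"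
    by (rule has_derivative_in_compose[OF d1 d2])
  moreover have "(\<lambda>t. Re (trace (cadj G ** (t *\<^sub>R H)))) = (*) (Re (trace (cadj G ** H)))"
    by (rule ext) (simp add: mm_scaleR_right trace_scaleR mult.commute)
  ultimately show ?thesis by (simp add: has_field_derivative_def)
qed

lemma min_orth:
  fixes \<rho> H G :: "complex^'n::finite^'n"
  assumes grad: "is_gradient f \<rho> G" and dens: "\<rho> \<in> density" and nonsing: "det \<rho> \<noteq> 0"
    and min: "\<forall>\<sigma>\<in>density. f \<rho> \<le> f \<sigma>" and hH: "hermitian H" and trH: "trace H = 0"
  shows "Re (trace (cadj G ** H)) = 0"
proof -
  obtain U l where U1: "cadj U ** U = mat 1" and U2: "U ** cadj U = mat 1" and pos: "\<forall>i. l i > 0"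
    and rho: "\<rho> = U ** dg (\<lambda>i. complex_of_real (l i)) ** cadj U"
    using density_spec[OF dens nonsing] by blast
  have tr: "trace \<rho> = 1" using dens by (simp add: density_def)
  obtain \<delta> where d: "\<delta> > 0" "\<forall>t. \<bar>t\<bar> < \<delta> \<longrightarrow> \<rho> + t *\<^sub>R H \<in> density"
    using pd_perturb[OF U1 U2 _ rho tr hH trH] pos by blast
  have hr: "hermitian \<rho>" unfolding rho by (rule herm_conj)
  show ?thesis
  proof (rule DERIV_local_min[OF line_deriv[OF hr hH grad] d(1)], intro allI impI)
    fix y :: real assume "\<bar>0 - y\<bar> < \<delta>"
    hence "\<rho> + y *\<^sub>R H \<in> density" using d(2) by simp
    thus "f (\<rho> + 0 *\<^sub>R H) \<le> f (\<rho> + y *\<^sub>R H)" using min by simp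
  qed
qed

lemma mat_dg: "mat k = dg (\<lambda>_. k)"
  by (simp add: vec_eq_iff mat_def dg_nth)

lemma trace_dg: "trace (dg d) = (\<Sum>i\<in>UNIV. d i)"
  by (simp add: trace_def dg_nth)

lemma const_imp_min:
  fixes \<rho> G :: "complex^'n::finite^'n"
  assumes convex: "convex_on {A. hermitian A} f" and grad: "is_gradient f \<rho> G"
    and dens: "\<rho> \<in> density" and G: "G = mat (complex_of_real c)"
  shows "is_minimizer f \<rho>"
  unfolding is_minimizer_def
proof (intro conjI ballI)
  show "\<rho> \<in> density" by fact
  fix \<sigma> :: "complex^'n^'n" assume sig: "\<sigma> \<in> density"
  have hr: "hermitian \<rho>" using dens by (simp add: density_def psd_def)
  have hs: "hermitian \<sigma>" using sig by (simp add: density_def psd_def)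
  define D where "D = \<sigma> - \<rho>"
  have hD: "hermitian D" unfolding D_def using hs hr by (rule herm_diff)
  define g where "g = (\<lambda>t::real. f (\<rho> + t *\<^sub>R D))"
  have hl: "hermitian (\<rho> + t *\<^sub>R D)" for t using hr hD by (intro herm_add herm_scaleR)
  have cg: "convex_on UNIV g"
  proof (rule convex_onI)
    fix t x y :: real assume t: "t > 0" "t < 1"
    have eq: "\<rho> + ((1 - t) *\<^sub>R x + t *\<^sub>R y) *\<^sub>R D = (1 - t) *\<^sub>R (\<rho> + x *\<^sub>R D) + t *\<^sub>R (\<rho> + y *\<^sub>R D)"
      by (simp add: algebra_simps)
    show "g ((1 - t) *\<^sub>R x + t *\<^sub>R y) \<le> (1 - t) * g x + t * g y"
      unfolding g_def eq using t hl by (intro convex_onD[OF convex]) auto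
  qed simp
  have deriv: "(g has_real_derivative Re (trace (cadj G ** D))) (at 0 within UNIV)"
    unfolding g_def using line_deriv[OF hr hD grad] by simp
  have "g 1 - g 0 \<ge> Re (trace (cadj G ** D)) * (1 - 0)"
    by (rule convex_on_imp_above_tangent[OF cg]) (simp_all add: deriv)
  moreover have "Re (trace (cadj G ** D)) = 0"
  proof -
    have "cadj G = dg (\<lambda>_. complex_of_real c)" unfolding G mat_dg by (simp add: cadj_dg)
    hence "trace (cadj G ** D) = complex_of_real c * trace D"
      by (simp add: trace_def dg_mult_nth sum_distrib_left)
    also have "trace D = 0" using sig dens by (simp add: D_def trace_sub density_def)
    finally show ?thesis by simp
  qed
  ultimately show "f \<rho> \<le> f \<sigma>" by (simp add: g_def D_def)
qed

lemma mm_diff_right: "(X - Y) ** (Z :: complex^'n::finite^'n) = X ** Z - Y ** Z"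
  by (simp add: vec_eq_iff matrix_matrix_mult_def ring_distribs sum_subtractf)

lemma mm_diff_left: "Z ** (X - Y) = Z ** X - Z ** (Y :: complex^'n::finite^'n)"
  by (simp add: vec_eq_iff matrix_matrix_mult_def ring_distribs sum_subtractf)

lemma conj_add:
  fixes U V :: "complex^'n::finite^'n"
  shows "U ** dg a ** V + U ** dg b ** V = U ** dg (\<lambda>i. a i + b i) ** V"
proof -
  have "dg a + dg b = dg (\<lambda>i. a i + b i)" by (simp add: vec_eq_iff dg_nth)
  thus ?thesis by (metis matrix_add_ldistrib mm_add_right)
qed

lemma conj_diff:
  fixes U V :: "complex^'n::finite^'n"
  shows "U ** dg a ** V - U ** dg b ** V = U ** dg (\<lambda>i. a i - b i) ** V"
proof -
  have "dg a - dg b = dg (\<lambda>i. a i - b i)" by (simp add: vec_eq_iff dg_nth)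
  thus ?thesis by (metis mm_diff_left mm_diff_right)
qed

lemma conj_scale:
  fixes U V :: "complex^'n::finite^'n"
  shows "U ** dg (\<lambda>i. complex_of_real (e * a i)) ** V = e *\<^sub>R (U ** dg (\<lambda>i. complex_of_real (a i)) ** V)"
proof -
  have "dg (\<lambda>i. complex_of_real (e * a i)) $ i $ j = (e *\<^sub>R dg (\<lambda>i. complex_of_real (a i))) $ i $ j" for i j
    unfolding nth_scaleR_c dg_nth by simp
  hence "dg (\<lambda>i. complex_of_real (e * a i)) = e *\<^sub>R dg (\<lambda>i. complex_of_real (a i))"
    by (simp add: vec_eq_iff)
  thus ?thesis by (simp add: mm_scaleR_left mm_scaleR_right)
qed

lemma mat_conj:
  fixes U :: "complex^'n::finite^'n"
  assumes U2: "U ** cadj U = mat 1"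
  shows "U ** dg (\<lambda>_. k) ** cadj U = mat k"
proof -
  have "U ** dg (\<lambda>_. k) = dg (\<lambda>_. k) ** U" by (simp add: vec_eq_iff mult_dg_nth dg_mult_nth mult.commute)
  hence "U ** dg (\<lambda>_. k) ** cadj U = dg (\<lambda>_. k) ** (U ** cadj U)" by (simp add: matrix_mul_assoc)
  thus ?thesis using U2 by (simp add: mat_dg[symmetric])
qed

lemma trace_conj:
  fixes U :: "complex^'n::finite^'n"
  assumes U1: "cadj U ** U = mat 1"
  shows "trace (U ** D ** cadj U) = trace D"
proof -
  have "trace (U ** D ** cadj U) = trace (cadj U ** (U ** D))" by (rule trace_mul_sym)
  also have "\<dots> = trace D" using U1 by (simp add: matrix_mul_assoc)
  finally show ?thesis .
qed

theorem lemma6: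
  fixes f :: "complex^'n::finite^'n \<Rightarrow> real" and \<rho> G :: "complex^'n^'n"
  assumes convex: "convex_on {A. hermitian A} f"
    and dens: "\<rho> \<in> density"
    and nonsing: "det \<rho> \<noteq> 0"
    and grad: "is_gradient f \<rho> G"
  shows "(is_minimizer f \<rho> \<longrightarrow> (\<forall>\<alpha>\<ge>0. rho_step G \<rho> \<alpha> = \<rho>))
       \<and> ((\<exists>\<alpha>>0. rho_step G \<rho> \<alpha> = \<rho>) \<longrightarrow> is_minimizer f \<rho>)"
proof -
  obtain U l where U1: "cadj U ** U = mat 1" and U2: "U ** cadj U = mat 1" and pos: "\<forall>i. l i > 0"
    and rho: "\<rho> = U ** dg (\<lambda>i. complex_of_real (l i)) ** cadj U"
    using density_spec[OF dens nonsing] by blast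
  have tr: "trace \<rho> = 1" using dens by (simp add: density_def)
  have hG: "hermitian G" using grad by (simp add: is_gradient_def)
  have ml: "mlog \<rho> = U ** dg (\<lambda>i. complex_of_real (ln (l i))) ** cadj U"
    unfolding rho using U1 U2 pos by (intro mlog_conj) auto
  show ?thesis
  proof (intro conjI impI allI)
    assume "is_minimizer f \<rho>"
    hence min: "\<forall>\<sigma>\<in>density. f \<rho> \<le> f \<sigma>" by (simp add: is_minimizer_def)
    have "\<exists>c::real. G = mat (complex_of_real c)"
    proof (rule grad_const_of_orth[OF hG])
      fix H :: "complex^'n^'n" assume "hermitian H" "trace H = 0"
      from min_orth[OF grad dens nonsing min this] show "Re (trace (G ** H)) = 0"
        using hG by (simp add: hermitian_def)
    qed
    then obtain c where G: "G = mat (complex_of_real c)" by blast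
    fix \<alpha> :: real assume "\<alpha> \<ge> 0"
    define e where "e = exp (- (\<alpha> * c))"
    have e0: "e > 0" unfolding e_def by simp
    have "(\<alpha> *\<^sub>R G) $ i $ j = mat (complex_of_real (\<alpha> * c)) $ i $ j" for i j
      unfolding G nth_scaleR_c by (simp add: mat_def)
    hence "\<alpha> *\<^sub>R G = U ** dg (\<lambda>_. complex_of_real (\<alpha> * c)) ** cadj U"
      unfolding mat_conj[OF U2] by (simp add: vec_eq_iff)
    hence "mlog \<rho> - \<alpha> *\<^sub>R G = U ** dg (\<lambda>i. complex_of_real (ln (l i) - \<alpha> * c)) ** cadj U"
      unfolding ml by (simp add: conj_diff)
    hence "mexp (mlog \<rho> - \<alpha> *\<^sub>R G) = mexp (U ** dg (\<lambda>i. complex_of_real (ln (l i) - \<alpha> * c)) ** cadj U)"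
      by (simp only:)
    also have "\<dots> = U ** dg (\<lambda>i. complex_of_real (exp (ln (l i) - \<alpha> * c))) ** cadj U"
      by (rule mexp_conj_real[OF U1 U2])
    also have "(\<lambda>i. exp (ln (l i) - \<alpha> * c)) = (\<lambda>i. e * l i)"
      using pos by (simp add: e_def exp_diff exp_minus field_simps)
    also have "U ** dg (\<lambda>i. complex_of_real (e * l i)) ** cadj U = e *\<^sub>R \<rho>"
      unfolding rho by (rule conj_scale)
    finally have E: "mexp (mlog \<rho> - \<alpha> *\<^sub>R G) = e *\<^sub>R \<rho>" .
    have trE: "trace (e *\<^sub>R \<rho>) = complex_of_real e" unfolding trace_scaleR tr by (simp add: scaleR_conv_of_real)
    have q: "(e *\<^sub>R \<rho>) $ i $ j / complex_of_real e = \<rho> $ i $ j" for i j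
      unfolding nth_scaleR_c using e0 by simp
    show "rho_step G \<rho> \<alpha> = \<rho>"
      unfolding rho_step_def Let_def E trE by (simp only: q vec_lambda_eta)
  next
    assume "\<exists>\<alpha>>0. rho_step G \<rho> \<alpha> = \<rho>"
    then obtain \<alpha> where a0: "\<alpha> > 0" and step: "rho_step G \<rho> \<alpha> = \<rho>" by blast
    define E where "E = mexp (mlog \<rho> - \<alpha> *\<^sub>R G)"
    have ent: "\<rho> $ i $ j = E $ i $ j / trace E" for i j
      using step[THEN arg_cong[where f="\<lambda>M. M $ i $ j"]] by (simp add: rho_step_def Let_def E_def)
    have hL: "hermitian (mlog \<rho> - \<alpha> *\<^sub>R G)" unfolding ml
      by (intro herm_diff herm_conj herm_scaleR hG)
    then obtain V b where V1: "cadj V ** V = mat 1" and V2: "V ** cadj V = mat 1"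
      and Lv: "mlog \<rho> - \<alpha> *\<^sub>R G = V ** dg (\<lambda>i. complex_of_real (b i)) ** cadj V"
      using spectral by blast
    have Ev: "E = V ** dg (\<lambda>i. complex_of_real (exp (b i))) ** cadj V"
      unfolding E_def Lv by (rule mexp_conj_real[OF V1 V2])
    define s where "s = (\<Sum>i\<in>UNIV. exp (b i))"
    have s0: "s > 0" unfolding s_def by (intro sum_pos) auto
    have trE: "trace E = complex_of_real s"
      unfolding Ev trace_conj[OF V1] trace_dg s_def by simp
    have "E $ i $ j = (s *\<^sub>R \<rho>) $ i $ j" for i j
      unfolding nth_scaleR_c using ent[of i j] s0 unfolding trE by (simp add: field_simps)
    hence "E = s *\<^sub>R \<rho>" by (simp add: vec_eq_iff)
    also have "s *\<^sub>R \<rho> = U ** dg (\<lambda>i. complex_of_real (exp (ln (l i) + ln s))) ** cadj U"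
    proof -
      have "(\<lambda>i. complex_of_real (exp (ln (l i) + ln s))) = (\<lambda>i. complex_of_real (s * l i))"
        using pos s0 by (simp add: exp_add mult.commute)
      thus ?thesis unfolding rho by (simp only: conj_scale)
    qed
    finally have "V ** dg (\<lambda>i. complex_of_real (exp (b i))) ** cadj V
        = U ** dg (\<lambda>i. complex_of_real (exp (ln (l i) + ln s))) ** cadj U" using Ev by simp
    from exp_inj_conj[OF V1 V2 U1 U2 this]
    have "mlog \<rho> - \<alpha> *\<^sub>R G = U ** dg (\<lambda>i. complex_of_real (ln (l i) + ln s)) ** cadj U"
      using Lv by simp
    also have "\<dots> = mlog \<rho> + mat (complex_of_real (ln s))"
      unfolding ml mat_conj[OF U2, symmetric] conj_add by simp
    finally have H: "mlog \<rho> + (- (\<alpha> *\<^sub>R G)) = mlog \<rho> + mat (complex_of_real (ln s))"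
      by simp
    hence "- (\<alpha> *\<^sub>R G) = mat (complex_of_real (ln s))" by (simp only: add_left_cancel)
    hence "\<alpha> *\<^sub>R G = - mat (complex_of_real (ln s))" by (metis minus_minus)
    hence P: "complex_of_real \<alpha> * G $ i $ j = (- mat (complex_of_real (ln s))) $ i $ j" for i j
      by (metis nth_scaleR_c)
    have "G $ i $ j = mat (complex_of_real (- ln s / \<alpha>)) $ i $ j" for i j
      using a0 P[of i j] by (cases "i = j") (simp_all add: mat_def field_simps)
    hence "G = mat (complex_of_real (- ln s / \<alpha>))" by (simp add: vec_eq_iff)
    thus "is_minimizer f \<rho>" by (rule const_imp_min[OF convex grad dens])
  qed
qed

end
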